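(* For any symmetric quiver $Q=(I,E)$ and $d\in\mathbb{N}^I$ there exists $\delta\in M(d)^{W_d}_\mathbb{R}$ such that $S^d_\delta=\{d\}$.
   Context: $Q$ symmetric: for all $i,j\in I$, the number of edges $i\to j$ equals that of $j\to i$. $R(d)=\bigoplus_{(i\to j)\in E}\mathrm{Hom}(V^i,V^j)$ ($\dim V^i=d^i$), $G(d)=\prod GL(V^i)$ with Lie algebra $\mathfrak{g}(d)$, diagonal torus $T(d)$ with weights $\beta^i_a$, $M(d)_\mathbb{R}$ its real weight space, $W_d=\prod\mathfrak{S}_{d^i}$. For a cocharacter $\lambda$: $n_\lambda=\langle\lambda,\det(R(d)^\vee)^{\lambda>0}\rangle-\langle\lambda,\det(\mathfrak{g}(d)^\vee)^{\lambda>0}\rangle$. A partition of $d$ is a collection of nonzero $d_1,\dots,d_k\in\mathbb{N}^I$ with sum $d$; $\lambda$ has associated partition $(d_j)$ if the $j$-th distinct value of $\langle\lambda,\beta^i_a\rangle$ occurs $d^i_j$ times for each $i$. $S^d_\delta$ is the set of partitions such that $n_\lambda/2+\langle\lambda,\delta\rangle\in\mathbb{Z}$ for all $\lambda$ with that associated partition; $\{d\}$ is the set consisting of the one-term partition. *)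

theory Defs
  imports Complex_Main
begin

text \<open>Quiver Q = (I,E): vertex type 'v (finite), edge type 'e (finite) with source
  src and target tgt. The weights beta^i_a of T(d)
  are indexed by pairs (i,a) with a < d i (0-based).\<close>

definition wt_idx :: "('v \<Rightarrow> nat) \<Rightarrow> ('v \<times> nat) set" where
  "wt_idx d = {(i,a). a < d i}"

definition symmetric_quiver :: "('e::finite \<Rightarrow> 'v) \<Rightarrow> ('e \<Rightarrow> 'v) \<Rightarrow> bool" where
  "symmetric_quiver src tgt \<longleftrightarrow>
     (\<forall>i j. card {e. src e = i \<and> tgt e = j} = card {e. src e = j \<and> tgt e = i})"

text \<open>Real weight space M(d)_R: real-valued functions on the weight indices (zero outside).\<close>
definition real_weights :: "('v \<Rightarrow> nat) \<Rightarrow> ('v \<times> nat \<Rightarrow> real) set" where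
  "real_weights d = {\<delta>. \<forall>x. x \<notin> wt_idx d \<longrightarrow> \<delta> x = 0}"

text \<open>W_d-invariant part M(d)^{W_d}_R: invariant under permuting the a-index within each i.\<close>
definition inv_real_weights :: "('v \<Rightarrow> nat) \<Rightarrow> ('v \<times> nat \<Rightarrow> real) set" where
  "inv_real_weights d = {\<delta> \<in> real_weights d.
      \<forall>i a b. a < d i \<longrightarrow> b < d i \<longrightarrow> \<delta> (i,a) = \<delta> (i,b)}"

text \<open>Cocharacters of T(d): integer vectors, lambda(i,a) = <lambda, beta^i_a>.\<close>
definition cochars :: "('v \<Rightarrow> nat) \<Rightarrow> ('v \<times> nat \<Rightarrow> int) set" where
  "cochars d = {l. \<forall>x. x \<notin> wt_idx d \<longrightarrow> l x = 0}"

definition pairing :: "('v::finite \<Rightarrow> nat) \<Rightarrow> ('v \<times> nat \<Rightarrow> int) \<Rightarrow> ('v \<times> nat \<Rightarrow> real) \<Rightarrow> real" where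
  "pairing d l \<delta> = (\<Sum>x\<in>wt_idx d. of_int (l x) * \<delta> x)"

definition pos_part :: "int \<Rightarrow> int" where
  "pos_part x = max 0 x"

text \<open>n_lambda = <lambda, det (R(d)^dual)^{lambda>0}> - <lambda, det (g(d)^dual)^{lambda>0}>.
  For an edge e : i -> j, Hom(V^i,V^j)^dual has weights beta^i_a - beta^j_b;
  g(d)^dual has weights beta^i_a - beta^i_b.\<close>
definition n_lambda :: "('e::finite \<Rightarrow> 'v::finite) \<Rightarrow> ('e \<Rightarrow> 'v) \<Rightarrow> ('v \<Rightarrow> nat)
    \<Rightarrow> ('v \<times> nat \<Rightarrow> int) \<Rightarrow> int" where
  "n_lambda src tgt d l =
     (\<Sum>e\<in>UNIV. \<Sum>a<d (src e). \<Sum>b<d (tgt e). pos_part (l (src e, a) - l (tgt e, b)))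
   - (\<Sum>i\<in>UNIV. \<Sum>a<d i. \<Sum>b<d i. pos_part (l (i, a) - l (i, b)))"

definition is_partition :: "('v \<Rightarrow> nat) \<Rightarrow> ('v \<Rightarrow> nat) list \<Rightarrow> bool" where
  "is_partition d P \<longleftrightarrow> (\<forall>q\<in>set P. q \<noteq> (\<lambda>_. 0)) \<and> (\<forall>i. (\<Sum>q\<leftarrow>P. q i) = d i)"

definition assoc_partition :: "('v \<Rightarrow> nat) \<Rightarrow> ('v \<times> nat \<Rightarrow> int) \<Rightarrow> ('v \<Rightarrow> nat) list" where
  "assoc_partition d l =
     map (\<lambda>v i. card {a. a < d i \<and> l (i,a) = v}) (sorted_list_of_set (l ` wt_idx d))"

definition S_set :: "('e::finite \<Rightarrow> 'v::finite) \<Rightarrow> ('e \<Rightarrow> 'v) \<Rightarrow> ('v \<Rightarrow> nat)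
    \<Rightarrow> ('v \<times> nat \<Rightarrow> real) \<Rightarrow> ('v \<Rightarrow> nat) list set" where
  "S_set src tgt d \<delta> = {P. is_partition d P \<and>
      (\<forall>l\<in>cochars d. assoc_partition d l = P \<longrightarrow>
          real_of_int (n_lambda src tgt d l) / 2 + pairing d l \<delta> \<in> \<int>)}"

end

theory Submission
  imports Defs
begin

lemma pair_parity:
  fixes h u :: "'a \<Rightarrow> 'a \<Rightarrow> int"
  assumes "finite S" "\<And>i j. i\<in>S \<Longrightarrow> j\<in>S \<Longrightarrow> even (h i j + h j i - u i j - u j i)"
  shows "even ((\<Sum>i\<in>S. \<Sum>j\<in>S. h i j) - (\<Sum>i\<in>S. \<Sum>j\<in>S. u i j) - (\<Sum>i\<in>S. h i i - u i i))"
  using assms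
proof (induction S rule: finite_induct)
  case empty
  then show ?case by simp
next
  case (insert x S)
  have ev: "even (\<Sum>j\<in>S. h x j + h j x - u x j - u j x)"
    by (rule dvd_sum) (use insert in auto)
  have IH: "even ((\<Sum>i\<in>S. \<Sum>j\<in>S. h i j) - (\<Sum>i\<in>S. \<Sum>j\<in>S. u i j) - (\<Sum>i\<in>S. h i i - u i i))"
    using insert by auto
  have "(\<Sum>i\<in>insert x S. \<Sum>j\<in>insert x S. h i j) - (\<Sum>i\<in>insert x S. \<Sum>j\<in>insert x S. u i j) - (\<Sum>i\<in>insert x S. h i i - u i i)
     = ((\<Sum>i\<in>S. \<Sum>j\<in>S. h i j) - (\<Sum>i\<in>S. \<Sum>j\<in>S. u i j) - (\<Sum>i\<in>S. h i i - u i i))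
       + (\<Sum>j\<in>S. h x j + h j x - u x j - u j x)"
    using insert(1,2) by (simp add: sum.distrib sum_subtractf algebra_simps)
  then show ?case using ev IH by simp
qed

lemma pos_part_parity: "even (pos_part x + pos_part (- x) - x - 2 * y)"
proof (cases "x \<ge> 0")
  case True
  then have "pos_part x + pos_part (- x) - x - 2 * y = 2 * (- y)" by (simp add: pos_part_def)
  then show ?thesis by presburger
next
  case False
  then have "pos_part x + pos_part (- x) - x - 2 * y = 2 * (- x - y)" by (simp add: pos_part_def)
  then show ?thesis by presburger
qed

definition FF :: "('v \<Rightarrow> nat) \<Rightarrow> ('v \<times> nat \<Rightarrow> int) \<Rightarrow> 'v \<Rightarrow> 'v \<Rightarrow> int" where
  "FF d l i j = (\<Sum>a<d i. \<Sum>b<d j. pos_part (l (i, a) - l (j, b)))"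

definition ss :: "('v \<Rightarrow> nat) \<Rightarrow> ('v \<times> nat \<Rightarrow> int) \<Rightarrow> 'v \<Rightarrow> int" where
  "ss d l i = (\<Sum>a<d i. l (i, a))"

lemma FF_swap: "even (FF d l i j + FF d l j i - (int (d j) * ss d l i + int (d i) * ss d l j))"
proof -
  have 1: "FF d l j i = (\<Sum>a<d i. \<Sum>b<d j. pos_part (l (j, b) - l (i, a)))"
    unfolding FF_def by (rule sum.swap)
  have 2: "int (d j) * ss d l i + int (d i) * ss d l j = (\<Sum>a<d i. \<Sum>b<d j. l (i, a) + l (j, b))"
    by (simp add: ss_def sum.distrib sum_distrib_left mult.commute)
  have "FF d l i j + FF d l j i - (int (d j) * ss d l i + int (d i) * ss d l j)
     = (\<Sum>a<d i. \<Sum>b<d j. pos_part (l (i, a) - l (j, b)) + pos_part (- (l (i, a) - l (j, b))) - (l (i, a) - l (j, b)) - 2 * l (j, b))"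
    unfolding 1 2 by (simp add: FF_def sum.distrib sum_subtractf algebra_simps)
  also have "even \<dots>"
    by (intro dvd_sum) (rule pos_part_parity)
  finally show ?thesis .
qed

lemma FF_diag: "even (FF d l i i - (int (d i) * ss d l i - ss d l i))"
proof -
  have "even ((\<Sum>a<d i. \<Sum>b<d i. pos_part (l (i, a) - l (i, b))) - (\<Sum>a<d i. \<Sum>b<d i. l (i, a))
     - (\<Sum>a<d i. pos_part (l (i, a) - l (i, a)) - l (i, a)))"
  proof (rule pair_parity)
    fix a b
    show "even (pos_part (l (i, a) - l (i, b)) + pos_part (l (i, b) - l (i, a)) - l (i, a) - l (i, b))"
    proof -
      have "pos_part (l (i, a) - l (i, b)) + pos_part (l (i, b) - l (i, a)) - l (i, a) - l (i, b)
        = pos_part (l (i, a) - l (i, b)) + pos_part (- (l (i, a) - l (i, b))) - (l (i, a) - l (i, b)) - 2 * l (i, b)"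
        by simp
      then show ?thesis using pos_part_parity[of "l (i, a) - l (i, b)" "l (i, b)"] by metis
    qed
  qed simp
  moreover have "(\<Sum>a<d i. \<Sum>b<d i. l (i, a)) = int (d i) * ss d l i"
    by (simp add: ss_def sum_distrib_left mult.commute)
  moreover have "(\<Sum>a<d i. pos_part (l (i, a) - l (i, a)) - l (i, a)) = - ss d l i"
    by (simp add: ss_def pos_part_def sum_negf)
  ultimately have "even (FF d l i i - int (d i) * ss d l i - - ss d l i)"
    unfolding FF_def by (simp only:)
  then obtain k where "FF d l i i - int (d i) * ss d l i - - ss d l i = 2 * k" by (rule dvdE)
  then have "FF d l i i - (int (d i) * ss d l i - ss d l i) = 2 * k" by simp
  then show ?thesis by simp
qed

definition mm :: "('e \<Rightarrow> 'v) \<Rightarrow> ('e \<Rightarrow> 'v) \<Rightarrow> 'v \<Rightarrow> 'v \<Rightarrow> int" where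
  "mm src tgt i j = int (card {e. src e = i \<and> tgt e = j})"

lemma edge_group:
  fixes src tgt :: "'e::finite \<Rightarrow> 'v::finite" and g :: "'v \<Rightarrow> 'v \<Rightarrow> int"
  shows "(\<Sum>e\<in>UNIV. g (src e) (tgt e)) = (\<Sum>i\<in>UNIV. \<Sum>j\<in>UNIV. mm src tgt i j * g i j)"
proof -
  have "(\<Sum>e\<in>UNIV. g (src e) (tgt e)) = (\<Sum>e\<in>UNIV. \<Sum>i\<in>UNIV. \<Sum>j\<in>UNIV. if src e = i \<and> tgt e = j then g i j else 0)"
  proof (rule sum.cong[OF refl])
    fix e
    have "(\<Sum>i\<in>UNIV. \<Sum>j\<in>UNIV. if src e = i \<and> tgt e = j then g i j else 0)
        = (\<Sum>i\<in>UNIV. if src e = i then g i (tgt e) else 0)"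
      by (rule sum.cong[OF refl]) (simp add: if_distrib[symmetric] cong: if_cong)
    also have "\<dots> = g (src e) (tgt e)" by simp
    finally show "g (src e) (tgt e) = (\<Sum>i\<in>UNIV. \<Sum>j\<in>UNIV. if src e = i \<and> tgt e = j then g i j else 0)" by simp
  qed
  also have "\<dots> = (\<Sum>i\<in>UNIV. \<Sum>e\<in>UNIV. \<Sum>j\<in>UNIV. if src e = i \<and> tgt e = j then g i j else 0)"
    by (rule sum.swap)
  also have "\<dots> = (\<Sum>i\<in>UNIV. \<Sum>j\<in>UNIV. \<Sum>e\<in>UNIV. if src e = i \<and> tgt e = j then g i j else 0)"
    by (rule sum.cong[OF refl], rule sum.swap)
  also have "\<dots> = (\<Sum>i\<in>UNIV. \<Sum>j\<in>UNIV. mm src tgt i j * g i j)"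
  proof (intro sum.cong[OF refl])
    fix i j
    have "(\<Sum>e\<in>UNIV. if src e = i \<and> tgt e = j then g i j else 0) = (\<Sum>e\<in>{e. src e = i \<and> tgt e = j}. g i j)"
      by (simp add: sum.inter_filter[symmetric])
    then show "(\<Sum>e\<in>UNIV. if src e = i \<and> tgt e = j then g i j else 0) = mm src tgt i j * g i j"
      by (simp add: mm_def)
  qed
  finally show ?thesis .
qed

definition ww :: "('e \<Rightarrow> 'v) \<Rightarrow> ('e \<Rightarrow> 'v) \<Rightarrow> ('v::finite \<Rightarrow> nat) \<Rightarrow> 'v \<Rightarrow> int" where
  "ww src tgt d i = (\<Sum>j\<in>UNIV. mm src tgt i j * int (d j)) - mm src tgt i i - int (d i) + 1"

lemma n_lambda_parity:
  fixes src tgt :: "'e::finite \<Rightarrow> 'v::finite"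
  assumes sym: "symmetric_quiver src tgt"
  shows "even (n_lambda src tgt d l - (\<Sum>i\<in>UNIV. ww src tgt d i * ss d l i))"
proof -
  have msym: "mm src tgt j i = mm src tgt i j" for i j
    using sym unfolding symmetric_quiver_def mm_def by metis
  have E: "(\<Sum>e\<in>UNIV. \<Sum>a<d (src e). \<Sum>b<d (tgt e). pos_part (l (src e, a) - l (tgt e, b)))
      = (\<Sum>i\<in>UNIV. \<Sum>j\<in>UNIV. mm src tgt i j * FF d l i j)"
    using edge_group[of "FF d l" src tgt] by (simp add: FF_def)
  have G: "(\<Sum>i\<in>UNIV. \<Sum>a<d i. \<Sum>b<d i. pos_part (l (i, a) - l (i, b))) = (\<Sum>i\<in>UNIV. FF d l i i)"
    by (simp add: FF_def)
  have P1: "even ((\<Sum>i\<in>UNIV. \<Sum>j\<in>UNIV. mm src tgt i j * FF d l i j)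
     - (\<Sum>i\<in>UNIV. \<Sum>j\<in>UNIV. mm src tgt i j * int (d j) * ss d l i)
     - (\<Sum>i\<in>UNIV. mm src tgt i i * FF d l i i - mm src tgt i i * int (d i) * ss d l i))"
  proof (rule pair_parity)
    fix i j :: 'v
    have "mm src tgt i j * FF d l i j + mm src tgt j i * FF d l j i - mm src tgt i j * int (d j) * ss d l i - mm src tgt j i * int (d i) * ss d l j
      = mm src tgt i j * (FF d l i j + FF d l j i - (int (d j) * ss d l i + int (d i) * ss d l j))"
      by (simp add: msym[of i j] algebra_simps)
    then show "even (mm src tgt i j * FF d l i j + mm src tgt j i * FF d l j i - mm src tgt i j * int (d j) * ss d l i - mm src tgt j i * int (d i) * ss d l j)"
      using FF_swap[of d l i j] by simp
  qed simp
  have P2: "even (\<Sum>i\<in>UNIV. mm src tgt i i * (FF d l i i - (int (d i) * ss d l i - ss d l i)))"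
    by (intro dvd_sum dvd_mult FF_diag)
  have P3: "even (\<Sum>i\<in>UNIV. (FF d l i i - (int (d i) * ss d l i - ss d l i)))"
    by (intro dvd_sum FF_diag)
  have "n_lambda src tgt d l - (\<Sum>i\<in>UNIV. ww src tgt d i * ss d l i)
     = ((\<Sum>i\<in>UNIV. \<Sum>j\<in>UNIV. mm src tgt i j * FF d l i j)
     - (\<Sum>i\<in>UNIV. \<Sum>j\<in>UNIV. mm src tgt i j * int (d j) * ss d l i)
     - (\<Sum>i\<in>UNIV. mm src tgt i i * FF d l i i - mm src tgt i i * int (d i) * ss d l i))
     + (\<Sum>i\<in>UNIV. mm src tgt i i * (FF d l i i - (int (d i) * ss d l i - ss d l i)))
     - (\<Sum>i\<in>UNIV. (FF d l i i - (int (d i) * ss d l i - ss d l i)))"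
    unfolding n_lambda_def E G ww_def
    by (simp add: sum.distrib sum_subtractf algebra_simps sum_distrib_left sum_distrib_right)
  then show ?thesis using P1 P2 P3 by simp
qed

lemma len_concat_upt: "length (concat (map f [0..<k])) = (\<Sum>j<k. length (f j))"
  by (induction k) auto

lemma sum_list_concat_upt: "sum_list (concat (map f [0..<k])) = (\<Sum>j<k. sum_list (f j :: int list))"
  by (induction k) auto

lemma sum_list_map_upt: "sum_list (map f [0..<k]) = (\<Sum>j<k. (f j :: nat))"
  by (induction k) auto

lemma wt_Sigma: "wt_idx d = (SIGMA i:UNIV. {..<d i})"
  by (auto simp: wt_idx_def)

lemma sum_wt:
  fixes d :: "'v::finite \<Rightarrow> nat"
  shows "(\<Sum>x\<in>wt_idx d. f x) = (\<Sum>i\<in>UNIV. \<Sum>a<d i. f (i, a))"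
  unfolding wt_Sigma by (subst sum.Sigma) auto

lemma finite_wt: "finite (wt_idx (d :: 'v::finite \<Rightarrow> nat))"
  unfolding wt_Sigma by auto

lemma card_wt: "card (wt_idx (d :: 'v::finite \<Rightarrow> nat)) = (\<Sum>i\<in>UNIV. d i)"
  using sum_wt[where d=d and f="\<lambda>_. 1::nat"] finite_wt[of d] by simp

lemma realize:
  fixes d :: "'v::finite \<Rightarrow> nat" and \<phi> :: "nat \<Rightarrow> int"
  assumes part: "is_partition d P" and sm: "strict_mono \<phi>"
  shows "\<exists>l\<in>cochars d. assoc_partition d l = P \<and>
     (\<Sum>x\<in>wt_idx d. l x) = (\<Sum>i\<in>UNIV. \<Sum>j<length P. int ((P!j) i) * \<phi> j)"
proof -
  define k where "k = length P"
  define xs where "xs i = concat (map (\<lambda>j. replicate ((P!j) i) (\<phi> j)) [0..<k])" for i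
  define l where "l x = (case x of (i, a) \<Rightarrow> if a < d i then xs i ! a else 0)" for x
  have inj: "inj \<phi>" using sm by (rule strict_mono_imp_inj_on)
  have dsum: "d i = (\<Sum>j<k. (P!j) i)" for i
  proof -
    have "d i = sum_list (map (\<lambda>q. q i) P)" using part by (simp add: is_partition_def)
    also have "P = map (\<lambda>j. P!j) [0..<k]" by (simp add: k_def map_nth)
    finally show ?thesis by (simp add: sum_list_map_upt o_def)
  qed
  have len: "length (xs i) = d i" for i
    by (simp add: xs_def len_concat_upt dsum)
  have lcoch: "l \<in> cochars d" by (auto simp: cochars_def l_def wt_idx_def)
  have cnt: "card {a. a < d i \<and> l (i, a) = \<phi> j} = (P!j) i" if "j < k" for i j
  proof -
    have "{a. a < d i \<and> l (i, a) = \<phi> j} = {a. a < length (xs i) \<and> xs i ! a = \<phi> j}"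
      by (auto simp: l_def len)
    then have "card {a. a < d i \<and> l (i, a) = \<phi> j} = length (filter (\<lambda>y. y = \<phi> j) (xs i))"
      by (simp add: length_filter_conv_card)
    also have "\<dots> = (\<Sum>j'<k. if \<phi> j' = \<phi> j then (P!j') i else 0)"
      unfolding xs_def filter_concat map_map o_def len_concat_upt
      by (intro sum.cong) (auto simp: filter_replicate)
    also have "\<dots> = (\<Sum>j'<k. if j' = j then (P!j') i else 0)"
      using inj by (intro sum.cong refl) (auto dest: injD)
    also have "\<dots> = (P!j) i" using that by simp
    finally show ?thesis .
  qed
  have img: "l ` wt_idx d = \<phi> ` {..<k}"
  proof
    show "l ` wt_idx d \<subseteq> \<phi> ` {..<k}"
    proof
      fix y assume "y \<in> l ` wt_idx d"
      then obtain i a where a: "a < d i" "y = xs i ! a" by (auto simp: wt_idx_def l_def)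
      then have "y \<in> set (xs i)" using len by (metis nth_mem)
      then show "y \<in> \<phi> ` {..<k}" by (auto simp: xs_def split: if_splits)
    qed
  next
    show "\<phi> ` {..<k} \<subseteq> l ` wt_idx d"
    proof
      fix y assume "y \<in> \<phi> ` {..<k}"
      then obtain j where j: "j < k" "y = \<phi> j" by auto
      have "P!j \<in> set P" using j by (simp add: k_def)
      then have "P!j \<noteq> (\<lambda>_. 0)" using part by (auto simp: is_partition_def)
      then obtain i where "(P!j) i \<noteq> 0" by auto
      then have "y \<in> set (xs i)" using j by (auto simp: xs_def)
      then obtain a where "a < length (xs i)" "xs i ! a = y" by (metis in_set_conv_nth)
      then show "y \<in> l ` wt_idx d"
        by (intro image_eqI[of _ _ "(i, a)"]) (auto simp: l_def wt_idx_def len)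
    qed
  qed
  have sorted: "sorted_list_of_set (\<phi> ` {..<k}) = map \<phi> [0..<k]"
  proof (rule sorted_distinct_set_unique)
    show "sorted (map \<phi> [0..<k])"
      unfolding sorted_map
      by (rule sorted_wrt_mono_rel[OF _ sorted_wrt_upt]) (use sm in \<open>simp add: strict_mono_less_eq\<close>)
    show "distinct (map \<phi> [0..<k])"
      using inj by (simp add: distinct_map inj_on_def)
  qed (auto simp: atLeast0LessThan)
  have ap: "assoc_partition d l = P"
  proof -
    have "assoc_partition d l = map (\<lambda>v i. card {a. a < d i \<and> l (i, a) = v}) (map \<phi> [0..<k])"
      by (simp add: assoc_partition_def img sorted)
    also have "\<dots> = map (\<lambda>j. P!j) [0..<k]"
      by (auto simp: cnt)
    also have "\<dots> = P" by (simp add: k_def map_nth)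
    finally show ?thesis .
  qed
  have "(\<Sum>x\<in>wt_idx d. l x) = (\<Sum>i\<in>UNIV. sum_list (xs i))"
    by (simp add: sum_wt l_def sum_list_sum_nth len atLeast0LessThan)
  also have "\<dots> = (\<Sum>i\<in>UNIV. \<Sum>j<k. int ((P!j) i) * \<phi> j)"
    by (simp add: xs_def sum_list_concat_upt sum_list_replicate)
  finally show ?thesis using lcoch ap by (auto simp: k_def)
qed

definition NN :: "('v::finite \<Rightarrow> nat) \<Rightarrow> nat" where
  "NN d = (\<Sum>i\<in>UNIV. d i)"

definition delta :: "('e::finite \<Rightarrow> 'v::finite) \<Rightarrow> ('e \<Rightarrow> 'v) \<Rightarrow> ('v \<Rightarrow> nat) \<Rightarrow> 'v \<times> nat \<Rightarrow> real" where
  "delta src tgt d x = (case x of (i, a) \<Rightarrow>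
     if a < d i then - real_of_int (ww src tgt d i) / 2 + 1 / real (NN d) else 0)"

lemma pairing_delta:
  fixes src tgt :: "'e::finite \<Rightarrow> 'v::finite"
  shows "pairing d l (delta src tgt d) = - real_of_int (\<Sum>i\<in>UNIV. ww src tgt d i * ss d l i) / 2
     + real_of_int (\<Sum>x\<in>wt_idx d. l x) / real (NN d)"
proof -
  have "pairing d l (delta src tgt d) = (\<Sum>i\<in>UNIV. \<Sum>a<d i. real_of_int (l (i, a)) * (- real_of_int (ww src tgt d i) / 2 + 1 / real (NN d)))"
    unfolding pairing_def sum_wt by (simp add: delta_def)
  also have "\<dots> = (\<Sum>i\<in>UNIV. - real_of_int (ww src tgt d i * ss d l i) / 2 + (\<Sum>a<d i. real_of_int (l (i, a))) / real (NN d))"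
    by (simp add: ss_def distrib_left sum.distrib sum_distrib_left sum_distrib_right sum_divide_distrib sum_subtractf algebra_simps)
  also have "\<dots> = - real_of_int (\<Sum>i\<in>UNIV. ww src tgt d i * ss d l i) / 2
     + real_of_int (\<Sum>x\<in>wt_idx d. l x) / real (NN d)"
    by (simp add: sum.distrib sum_wt sum_divide_distrib sum_negf sum_subtractf)
  finally show ?thesis .
qed

lemma crit:
  fixes src tgt :: "'e::finite \<Rightarrow> 'v::finite"
  assumes sym: "symmetric_quiver src tgt" and N: "NN d > 0"
  shows "(real_of_int (n_lambda src tgt d l) / 2 + pairing d l (delta src tgt d) \<in> \<int>)
     \<longleftrightarrow> int (NN d) dvd (\<Sum>x\<in>wt_idx d. l x)"
proof -
  obtain k where k: "n_lambda src tgt d l - (\<Sum>i\<in>UNIV. ww src tgt d i * ss d l i) = 2 * k"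
    using n_lambda_parity[OF sym, of d l] by (rule dvdE)
  define T where "T = (\<Sum>x\<in>wt_idx d. l x)"
  have eq: "real_of_int (n_lambda src tgt d l) / 2 + pairing d l (delta src tgt d)
      = real_of_int k + real_of_int T / real (NN d)"
  proof -
    have "real_of_int (n_lambda src tgt d l) = real_of_int (\<Sum>i\<in>UNIV. ww src tgt d i * ss d l i) + 2 * real_of_int k"
      using k by (metis add.commute diff_eq_eq of_int_add of_int_mult of_int_numeral)
    then show ?thesis by (simp add: pairing_delta T_def add_divide_distrib)
  qed
  have "(real_of_int k + real_of_int T / real (NN d) \<in> \<int>) \<longleftrightarrow> (real_of_int T / real (NN d) \<in> \<int>)"
    by (metis Ints_add Ints_diff Ints_of_int add_diff_cancel_left')
  also have "\<dots> \<longleftrightarrow> int (NN d) dvd T"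
  proof
    assume "real_of_int T / real (NN d) \<in> \<int>"
    then obtain z where "real_of_int T / real (NN d) = real_of_int z" by (auto elim: Ints_cases)
    then have "real_of_int T = real_of_int (int (NN d) * z)" using N by (simp add: field_simps)
    then have "T = int (NN d) * z" by (simp only: of_int_eq_iff)
    then show "int (NN d) dvd T" by simp
  next
    assume "int (NN d) dvd T"
    then obtain z where "T = int (NN d) * z" by (rule dvdE)
    then have "real_of_int T / real (NN d) = real_of_int z" using N by simp
    then show "real_of_int T / real (NN d) \<in> \<int>" by simp
  qed
  finally show ?thesis using eq T_def by simp
qed

theorem proposition8p8:
  fixes src tgt :: "'e::finite \<Rightarrow> 'v::finite" and d :: "'v \<Rightarrow> nat"
  assumes "symmetric_quiver src tgt"
    and "d \<noteq> (\<lambda>_. 0)"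
  shows "\<exists>\<delta>\<in>inv_real_weights d. S_set src tgt d \<delta> = {[d]}"
proof
  note sym = assms(1)
  obtain i0 where i0: "d i0 \<noteq> 0" using assms(2) by auto
  have N: "NN d > 0"
    unfolding NN_def using i0 member_le_sum[of i0 UNIV d] by simp
  show "delta src tgt d \<in> inv_real_weights d"
    by (auto simp: inv_real_weights_def real_weights_def wt_idx_def delta_def)
  show "S_set src tgt d (delta src tgt d) = {[d]}"
  proof
    show "{[d]} \<subseteq> S_set src tgt d (delta src tgt d)"
    proof -
      have "is_partition d [d]" using assms(2) by (simp add: is_partition_def)
      moreover have "real_of_int (n_lambda src tgt d l) / 2 + pairing d l (delta src tgt d) \<in> \<int>"
        if "l \<in> cochars d" "assoc_partition d l = [d]" for l
      proof -
        have "length (sorted_list_of_set (l ` wt_idx d)) = 1"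
        proof -
          have "length (assoc_partition d l) = length (sorted_list_of_set (l ` wt_idx d))"
            by (simp add: assoc_partition_def)
          then show ?thesis using that(2) by simp
        qed
        then have "card (l ` wt_idx d) = 1" by simp
        then obtain v where v: "l ` wt_idx d = {v}" by (rule card_1_singletonE)
        have "(\<Sum>x\<in>wt_idx d. l x) = (\<Sum>x\<in>wt_idx d. v)"
          using v by (intro sum.cong) auto
        also have "\<dots> = int (NN d) * v" by (simp add: card_wt NN_def)
        finally have "int (NN d) dvd (\<Sum>x\<in>wt_idx d. l x)" by simp
        then show ?thesis using crit[OF sym N] by blast
      qed
      ultimately show ?thesis by (auto simp: S_set_def)
    qed
  next
    show "S_set src tgt d (delta src tgt d) \<subseteq> {[d]}"
    proof
      fix P assume PS: "P \<in> S_set src tgt d (delta src tgt d)"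
      then have part: "is_partition d P" by (simp add: S_set_def)
      have cond: "\<And>l. l \<in> cochars d \<Longrightarrow> assoc_partition d l = P \<Longrightarrow> int (NN d) dvd (\<Sum>x\<in>wt_idx d. l x)"
        using PS crit[OF sym N] by (auto simp: S_set_def)
      show "P \<in> {[d]}"
      proof (rule ccontr)
        assume ne: "P \<notin> {[d]}"
        obtain q0 q1 rest where Peq: "P = q0 # q1 # rest"
        proof (cases P)
          case Nil
          then show ?thesis using part i0 by (simp add: is_partition_def)
        next
          case (Cons q0 r)
          show ?thesis
          proof (cases r)
            case Nil
            then have "q0 = d" using part Cons by (auto simp: is_partition_def)
            then show ?thesis using ne Cons Nil by simp
          next
            case (Cons q1 rest)
            then show ?thesis using \<open>P = q0 # r\<close> that by simp
          qed
        qed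
        define k where "k = length P"
        have k2: "k \<ge> 2" by (simp add: k_def Peq)
        have q0nz: "q0 \<noteq> (\<lambda>_. 0)" and q1nz: "q1 \<noteq> (\<lambda>_. 0)"
          using part by (auto simp: is_partition_def Peq)
        have dge: "q0 i + q1 i \<le> d i" for i
        proof -
          have "q0 i + (q1 i + (\<Sum>q\<leftarrow>rest. q i)) = d i" using part by (simp add: is_partition_def Peq)
          then show ?thesis by linarith
        qed
        define A where "A = (\<Sum>i\<in>UNIV. q0 i)"
        obtain a0 where "q0 a0 \<noteq> 0" using q0nz by auto
        then have Apos: "A > 0" unfolding A_def using member_le_sum[of a0 UNIV q0] by simp
        obtain a1 where a1: "q1 a1 \<noteq> 0" using q1nz by auto
        have ANl: "A < NN d" unfolding A_def NN_def
        proof (rule sum_strict_mono_ex1)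
          show "\<forall>x\<in>UNIV. q0 x \<le> d x" using dge add_leD1 by blast
          show "\<exists>a\<in>UNIV. q0 a < d a" using dge[of a1] a1 by (intro bexI[of _ a1]) auto
        qed simp
        define \<phi>0 :: "nat \<Rightarrow> int" where "\<phi>0 j = int j" for j
        define \<phi>1 :: "nat \<Rightarrow> int" where "\<phi>1 j = (if j = 0 then -1 else int j)" for j
        have sm0: "strict_mono \<phi>0" by (auto simp: strict_mono_def \<phi>0_def)
        have sm1: "strict_mono \<phi>1" by (auto simp: strict_mono_def \<phi>1_def)
        obtain l0 where l0: "l0 \<in> cochars d" "assoc_partition d l0 = P"
          "(\<Sum>x\<in>wt_idx d. l0 x) = (\<Sum>i\<in>UNIV. \<Sum>j<k. int ((P!j) i) * \<phi>0 j)"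
          using realize[OF part sm0] by (auto simp: k_def)
        obtain l1 where l1: "l1 \<in> cochars d" "assoc_partition d l1 = P"
          "(\<Sum>x\<in>wt_idx d. l1 x) = (\<Sum>i\<in>UNIV. \<Sum>j<k. int ((P!j) i) * \<phi>1 j)"
          using realize[OF part sm1] by (auto simp: k_def)
        have diff: "(\<Sum>x\<in>wt_idx d. l0 x) - (\<Sum>x\<in>wt_idx d. l1 x) = int A"
        proof -
          have "(\<Sum>x\<in>wt_idx d. l0 x) - (\<Sum>x\<in>wt_idx d. l1 x)
              = (\<Sum>i\<in>UNIV. \<Sum>j<k. int ((P!j) i) * (\<phi>0 j - \<phi>1 j))"
            unfolding l0(3) l1(3) by (simp add: sum_subtractf algebra_simps)
          also have "\<dots> = (\<Sum>i\<in>UNIV. \<Sum>j<k. if j = 0 then int ((P!j) i) else 0)"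
            by (intro sum.cong refl) (simp add: \<phi>0_def \<phi>1_def)
          also have "\<dots> = (\<Sum>i\<in>UNIV. int (q0 i))"
            using k2 by (simp add: Peq)
          finally show ?thesis by (simp add: A_def)
        qed
        have "int (NN d) dvd int A"
          using dvd_diff[OF cond[OF l0(1,2)] cond[OF l1(1,2)]] diff by simp
        then have "NN d dvd A" by simp
        then show False using Apos ANl by (simp add: nat_dvd_not_less)
      qed
    qed
  qed
qed

end
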